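(* Let $F:\mathbb{R}^n\rightrightarrows\mathbb{R}^n$ be upper semicontinuous with $F(x)$ nonempty, compact and convex for all $x$, and consider $\Sigma:\dot x\in F(x)$. A closed set $K\subset\mathbb{R}^n$ is forward invariant for $\Sigma$ if $$F(x)\subset T_K(y)\qquad\forall x\in\mathbb{R}^n\setminus K,\ \forall y\in\mathrm{Proj}_K(x).$$
   Context: A closed set $K$ is forward invariant for $\Sigma$ if every solution (locally absolutely continuous $\phi$ with $\dot\phi(t)\in F(\phi(t))$ a.e.) starting in $K$ satisfies $\phi(\mathrm{dom}\,\phi)\subset K$. $\mathrm{Proj}_K(x):=\{y\in K:|x-y|=\inf_{z\in K}|x-z|\}$. $T_K(y)$ denotes the contingent (Bouligand tangent) cone to $K$ at $y$: $T_K(y):=\{v\in\mathbb{R}^n:\liminf_{h\to0^+}\frac{|y+hv|_K}{h}=0\}$, where $|z|_K$ is the distance from $z$ to $K$. *)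

theory Defs
  imports "HOL-Analysis.Analysis"
begin

definition usc_setvalued :: "('a::metric_space \<Rightarrow> 'b::topological_space set) \<Rightarrow> bool" where
  "usc_setvalued F \<longleftrightarrow>
     (\<forall>x U. open U \<and> F x \<subseteq> U \<longrightarrow> (\<exists>d>0. \<forall>y. dist y x < d \<longrightarrow> F y \<subseteq> U))"

definition abs_cont_on :: "real set \<Rightarrow> (real \<Rightarrow> 'a::real_normed_vector) \<Rightarrow> bool" where
  "abs_cont_on S f \<longleftrightarrow>
     (\<forall>e>0. \<exists>d>0. \<forall>D. finite D
        \<and> (\<forall>(a,b)\<in>D. a \<le> b \<and> {a..b} \<subseteq> S)
        \<and> disjoint_family_on (\<lambda>(a,b). {a<..<b}) D
        \<and> (\<Sum>(a,b)\<in>D. b - a) < d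
        \<longrightarrow> (\<Sum>(a,b)\<in>D. norm (f b - f a)) < e)"

definition loc_abs_cont_on :: "real set \<Rightarrow> (real \<Rightarrow> 'a::real_normed_vector) \<Rightarrow> bool" where
  "loc_abs_cont_on I f \<longleftrightarrow> (\<forall>a b. {a..b} \<subseteq> I \<longrightarrow> abs_cont_on {a..b} f)"

definition is_solution ::
  "('a::euclidean_space \<Rightarrow> 'a set) \<Rightarrow> real set \<Rightarrow> (real \<Rightarrow> 'a) \<Rightarrow> bool" where
  "is_solution F I \<phi> \<longleftrightarrow>
     is_interval I \<and> 0 \<in> I \<and> I \<subseteq> {0..} \<and>
     loc_abs_cont_on I \<phi> \<and>
     (AE t in lebesgue. t \<in> I \<longrightarrow>
        (\<exists>v. (\<phi> has_vector_derivative v) (at t within I) \<and> v \<in> F (\<phi> t)))"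

definition forward_invariant :: "('a::euclidean_space \<Rightarrow> 'a set) \<Rightarrow> 'a set \<Rightarrow> bool" where
  "forward_invariant F K \<longleftrightarrow>
     (\<forall>I \<phi>. is_solution F I \<phi> \<and> \<phi> 0 \<in> K \<longrightarrow> \<phi> ` I \<subseteq> K)"

definition Proj :: "'a::metric_space set \<Rightarrow> 'a \<Rightarrow> 'a set" where
  "Proj K x = {y \<in> K. dist x y = infdist x K}"

definition contingent_cone :: "'a::real_normed_vector set \<Rightarrow> 'a \<Rightarrow> 'a set" where
  "contingent_cone K y =
     {v. Liminf (at_right 0) (\<lambda>h::real. ereal (infdist (y + h *\<^sub>R v) K / h)) = 0}"

end

theory Submission
  imports Defs
begin

lemma tangent_normal:
  fixes x y v :: "'a::real_inner"
  assumes y: "y \<in> Proj K x" and v: "v \<in> contingent_cone K y"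
  shows "(x - y) \<bullet> v \<le> 0"
proof (rule ccontr)
  assume "\<not> ?thesis"
  hence p: "(x - y) \<bullet> v > 0" by simp
  define r where "r = norm (x - y)"
  have r: "r > 0" using p by (auto simp: r_def)
  have vne: "v \<noteq> 0" using p by auto
  define c where "c = ((x - y) \<bullet> v) / (2 * r)"
  have c: "c > 0" using p r by (simp add: c_def)
  define h0 where "h0 = min (((x - y) \<bullet> v) / (norm v)^2) (r / c)"
  have h0: "h0 > 0" using p r c vne by (simp add: h0_def)
  have rid: "infdist x K = r" using y by (simp add: Proj_def r_def dist_norm)
  have key: "ereal c \<le> ereal (infdist (y + h *\<^sub>R v) K / h)" if h: "0 < h" "h < h0" for h
  proof -
    have "h < ((x - y) \<bullet> v) / (norm v)^2" "h < r / c" using h by (auto simp: h0_def)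
    hence h1: "h * (norm v)^2 \<le> (x - y) \<bullet> v" and h2: "c * h \<le> r"
      using vne c by (simp_all add: pos_less_divide_eq mult.commute)
    have xyh: "x - (y + h *\<^sub>R v) = (x - y) - h *\<^sub>R v" by (simp add: algebra_simps)
    have sq: "(norm (x - (y + h *\<^sub>R v)))^2 = r^2 - 2 * h * ((x - y) \<bullet> v) + h^2 * (norm v)^2"
      unfolding xyh r_def power2_norm_eq_inner
      by (simp add: inner_diff_left inner_diff_right inner_commute power2_eq_square algebra_simps)
    have rc: "2 * r * c = (x - y) \<bullet> v" using r by (simp add: c_def)
    have "(r - c * h)^2 = r^2 - 2 * r * c * h + c^2 * h^2"
      by (simp add: power2_eq_square algebra_simps)
    hence sq2: "(r - c * h)^2 = r^2 - h * ((x - y) \<bullet> v) + c^2 * h^2" using rc by (simp add: mult.commute)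
    have A: "h^2 * (norm v)^2 \<le> h * ((x - y) \<bullet> v)"
      using mult_left_mono[OF h1, of h] h by (simp add: power2_eq_square mult.assoc)
    have B: "c^2 * h^2 \<ge> 0" by simp
    have "(norm (x - (y + h *\<^sub>R v)))^2 \<le> (r - c * h)^2"
      unfolding sq sq2 using A B by linarith
    hence n: "norm (x - (y + h *\<^sub>R v)) \<le> r - c * h"
      by (rule power2_le_imp_le) (use h2 in linarith)
    have "infdist x K \<le> infdist (y + h *\<^sub>R v) K + dist x (y + h *\<^sub>R v)" by (rule infdist_triangle)
    hence "c * h \<le> infdist (y + h *\<^sub>R v) K" using n rid by (simp add: dist_norm)
    hence "c \<le> infdist (y + h *\<^sub>R v) K / h" using h by (simp add: pos_le_divide_eq mult.commute)
    thus ?thesis by simp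
  qed
  have "eventually (\<lambda>h. ereal c \<le> ereal (infdist (y + h *\<^sub>R v) K / h)) (at_right 0)"
    using eventually_at_right_real[OF h0] by (rule eventually_mono) (use key in auto)
  hence "ereal c \<le> Liminf (at_right 0) (\<lambda>h::real. ereal (infdist (y + h *\<^sub>R v) K / h))"
    by (rule Liminf_bounded)
  moreover have "Liminf (at_right 0) (\<lambda>h::real. ereal (infdist (y + h *\<^sub>R v) K / h)) = 0"
    using v by (simp add: contingent_cone_def)
  ultimately show False using c by simp
qed

lemma ac_lusin:
  fixes g :: "real \<Rightarrow> real"
  assumes ac: "abs_cont_on {a..b} g" and cont: "continuous_on {a..b} g"
    and E: "negligible E" "E \<subseteq> {a<..<b}"
  shows "negligible (g ` E)"
proof -
  have "\<exists>T. g ` E \<subseteq> T \<and> T \<in> lmeasurable \<and> measure lebesgue T \<le> e" if "e > 0" for e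
  proof -
    obtain \<delta> where \<delta>: "\<delta> > 0" and ac\<delta>: "\<And>D. finite D \<and> (\<forall>(p,q)\<in>D. p \<le> q \<and> {p..q} \<subseteq> {a..b})
        \<and> disjoint_family_on (\<lambda>(p,q). {p<..<q}) D \<and> (\<Sum>(p,q)\<in>D. q - p) < \<delta>
        \<Longrightarrow> (\<Sum>(p,q)\<in>D. norm (g q - g p)) < e"
      using ac \<open>e>0\<close> unfolding abs_cont_on_def by meson
    have Eleb: "E \<in> sets lebesgue" using E(1) negligible_iff_null_sets by (auto simp: null_sets_def)
    obtain U where U: "open U" "E \<subseteq> U" "(U - E) \<in> lmeasurable" "emeasure lebesgue (U - E) < ennreal \<delta>"
      using sets_lebesgue_outer_open[OF Eleb \<delta>] by blast
    define V where "V = U \<inter> {a<..<b}"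
    have Vo: "open V" using U by (simp add: V_def open_Int)
    have EV: "E \<subseteq> V" using U E by (auto simp: V_def)
    have Vm: "V \<in> lmeasurable"
      by (rule lmeasurable_open[OF _ Vo]) (auto simp: V_def intro: bounded_subset[of "{a..b}"])
    have mUE: "measure lebesgue (U - E) < \<delta>"
      using U(3,4) \<delta> by (simp add: emeasure_eq_measure2 ennreal_less_iff)
    have Em: "E \<in> lmeasurable" "measure lebesgue E = 0"
      using E(1) negligible_imp_measurable negligible_imp_measure0 by auto
    have mV: "measure lebesgue V < \<delta>"
    proof -
      have "V \<subseteq> (U-E) \<union> E" by (auto simp: V_def)
      hence "measure lebesgue V \<le> measure lebesgue ((U-E) \<union> E)"
        using Vm fmeasurable.Un[OF U(3) Em(1)] by (intro measure_mono_fmeasurable) simp_all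
      also have "\<dots> \<le> measure lebesgue (U-E) + measure lebesgue E"
        using U(3) Em by (intro measure_Un_le) auto
      finally show ?thesis using mUE Em by simp
    qed
    define \<C> where "\<C> = components V"
    have cc: "countable \<C>"
      unfolding \<C>_def
      by (rule countable_disjoint_open_subsets)
         (auto simp: open_components[OF Vo] pairwise_def disjnt_def components_nonoverlap)
    have Csub: "C \<subseteq> V" if "C \<in> \<C>" for C using that in_components_subset \<C>_def by blast
    have Vsub: "V \<subseteq> {a..b}" by (auto simp: V_def)
    have clsub: "closure C \<subseteq> {a..b}" if "C \<in> \<C>" for C
      using closure_minimal[of C "{a..b}"] Csub[OF that] Vsub by auto
    have Cint: "is_interval C" if "C \<in> \<C>" for C
      using that in_components_connected is_interval_connected_1 \<C>_def by blast
    have "\<exists>p q. p \<in> closure C \<and> q \<in> closure C \<and> (\<forall>x\<in>closure C. g p \<le> g x \<and> g x \<le> g q)"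
      if C: "C \<in> \<C>" for C
    proof -
      have cp: "compact (closure C)"
        using clsub[OF C] by (meson bounded_closed_interval bounded_subset closed_closure compact_eq_bounded_closed)
      have ne: "closure C \<noteq> {}" using C in_components_nonempty \<C>_def by auto
      have co: "continuous_on (closure C) g" using continuous_on_subset[OF cont clsub[OF C]] .
      obtain p where "p \<in> closure C" "\<forall>y\<in>closure C. g p \<le> g y"
        using continuous_attains_inf[OF cp ne co] by blast
      moreover obtain q where "q \<in> closure C" "\<forall>y\<in>closure C. g y \<le> g q"
        using continuous_attains_sup[OF cp ne co] by blast
      ultimately show ?thesis by blast
    qed
    then obtain P Q where PQ: "\<And>C. C \<in> \<C> \<Longrightarrow> P C \<in> closure C \<and> Q C \<in> closure C \<and>
        (\<forall>x\<in>closure C. g (P C) \<le> g x \<and> g x \<le> g (Q C))" by metis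
    define J where "J C = {g (P C) .. g (Q C)}" for C
    have betw: "x \<in> C" if C: "C \<in> \<C>" and x: "min (P C) (Q C) < x" "x < max (P C) (Q C)" for C x
    proof -
      have pq: "P C \<in> closure C" "Q C \<in> closure C" using PQ[OF C] by auto
      have *: "\<exists>y\<in>C. y < x" if pp: "p \<in> closure C" "p < x" for p
      proof -
        have "x - p > 0" using pp by simp
        then obtain y where "y \<in> C" "dist y p < x - p" using pp(1) unfolding closure_approachable by blast
        thus ?thesis by (intro bexI[of _ y]) (auto simp: dist_real_def)
      qed
      have **: "\<exists>y\<in>C. x < y" if pp: "p \<in> closure C" "x < p" for p
      proof -
        have "p - x > 0" using pp by simp
        then obtain y where "y \<in> C" "dist y p < p - x" using pp(1) unfolding closure_approachable by blast
        thus ?thesis by (intro bexI[of _ y]) (auto simp: dist_real_def)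
      qed
      obtain y1 where "y1 \<in> C" "y1 < x"
        using *[of "min (P C) (Q C)"] x pq by (cases "P C \<le> Q C") (auto simp: min_def)
      moreover obtain y2 where "y2 \<in> C" "x < y2"
        using **[of "max (P C) (Q C)"] x pq by (cases "P C \<le> Q C") (auto simp: max_def)
      ultimately show ?thesis using Cint[OF C] unfolding is_interval_1 by (meson less_imp_le)
    qed
    have cover: "g ` E \<subseteq> (\<Union>C\<in>\<C>. J C)"
    proof
      fix y assume "y \<in> g ` E"
      then obtain x where x: "x \<in> E" "y = g x" by auto
      then obtain C where C: "C \<in> \<C>" "x \<in> C" using EV \<C>_def Union_components[of V] by blast
      hence "x \<in> closure C" using closure_subset by blast
      thus "y \<in> (\<Union>C\<in>\<C>. J C)" using PQ[OF C(1)] C x by (auto simp: J_def)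
    qed
    have bound: "measure lebesgue (\<Union>C\<in>\<G>. J C) \<le> e" if G: "\<G> \<subseteq> \<C>" "finite \<G>" for \<G>
    proof -
      define \<G>' where "\<G>' = {C\<in>\<G>. P C \<noteq> Q C}"
      define pr where "pr C = (min (P C) (Q C), max (P C) (Q C))" for C
      have G'sub: "\<G>' \<subseteq> \<C>" "finite \<G>'" using G by (auto simp: \<G>'_def)
      have gPQ: "g (P C) \<le> g (Q C)" if "C \<in> \<C>" for C using PQ[OF that] by blast
      have inj: "inj_on pr \<G>'"
      proof (rule inj_onI)
        fix C1 C2 assume C: "C1 \<in> \<G>'" "C2 \<in> \<G>'" "pr C1 = pr C2"
        have C': "C1 \<in> \<C>" "C2 \<in> \<C>" using C G'sub by auto
        define m where "m = (min (P C1) (Q C1) + max (P C1) (Q C1)) / 2"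
        have lt: "min (P C1) (Q C1) < max (P C1) (Q C1)" using C(1) by (auto simp: \<G>'_def)
        have "m \<in> C1" using betw[OF C'(1)] lt by (auto simp: m_def)
        moreover have "m \<in> C2" using betw[OF C'(2)] lt C(3) by (auto simp: m_def pr_def)
        ultimately show "C1 = C2" using components_eq[of C1 V C2] C' \<C>_def by blast
      qed
      have "measure lebesgue (\<Union>C\<in>\<G>. J C) \<le> (\<Sum>C\<in>\<G>. measure lebesgue (J C))"
        using G by (intro measure_UNION_le) (auto simp: J_def)
      also have "\<dots> = (\<Sum>C\<in>\<G>. g (Q C) - g (P C))"
        using G gPQ by (intro sum.cong) (auto simp: J_def)
      also have "\<dots> = (\<Sum>C\<in>\<G>'. g (Q C) - g (P C))"
        using G by (intro sum.mono_neutral_right) (auto simp: \<G>'_def)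
      also have "\<dots> = (\<Sum>C\<in>\<G>'. (\<lambda>(p,q). norm (g q - g p)) (pr C))"
        using G'sub gPQ by (intro sum.cong) (auto simp: pr_def min_def max_def)
      also have "\<dots> = (\<Sum>d\<in>pr ` \<G>'. (\<lambda>(p,q). norm (g q - g p)) d)"
        by (rule sum.reindex[symmetric, OF inj, unfolded comp_def])
      also have "\<dots> < e"
      proof (rule ac\<delta>, intro conjI)
        show "finite (pr ` \<G>')" using G'sub by auto
        show "\<forall>(p,q)\<in>pr ` \<G>'. p \<le> q \<and> {p..q} \<subseteq> {a..b}"
        proof -
          have "fst (pr C) \<le> snd (pr C) \<and> {fst (pr C)..snd (pr C)} \<subseteq> {a..b}" if "C \<in> \<G>'" for C
          proof -
            have C: "C \<in> \<C>" using that G'sub by auto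
            have "P C \<in> {a..b}" "Q C \<in> {a..b}" using PQ[OF C] clsub[OF C] by auto
            thus ?thesis by (auto simp: pr_def)
          qed
          thus ?thesis by (auto simp: case_prod_beta)
        qed
        have intsub: "{fst (pr C)<..<snd (pr C)} \<subseteq> C" if "C \<in> \<G>'" for C
          using betw[of C] that G'sub by (auto simp: pr_def)
        show "disjoint_family_on (\<lambda>(p,q). {p<..<q}) (pr ` \<G>')"
        proof (unfold disjoint_family_on_def, intro ballI impI)
          fix d1 d2 assume d: "d1 \<in> pr ` \<G>'" "d2 \<in> pr ` \<G>'" "d1 \<noteq> d2"
          then obtain C1 C2 where C: "C1 \<in> \<G>'" "C2 \<in> \<G>'" "d1 = pr C1" "d2 = pr C2" by blast
          show "(case d1 of (p,q) \<Rightarrow> {p<..<q}) \<inter> (case d2 of (p,q) \<Rightarrow> {p<..<q}) = {}"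
          proof (rule ccontr)
            assume "(case d1 of (p,q) \<Rightarrow> {p<..<q}) \<inter> (case d2 of (p,q) \<Rightarrow> {p<..<q}) \<noteq> {}"
            hence "{fst (pr C1)<..<snd (pr C1)} \<inter> {fst (pr C2)<..<snd (pr C2)} \<noteq> {}"
              using C(3,4) by (simp only: case_prod_beta not_False_eq_True)
            then obtain x where x: "x \<in> {fst (pr C1)<..<snd (pr C1)}" "x \<in> {fst (pr C2)<..<snd (pr C2)}"
              by blast
            have "x \<in> C1" "x \<in> C2" using x intsub[OF C(1)] intsub[OF C(2)] by auto
            hence "C1 = C2" using components_eq[of C1 V C2] C G'sub \<C>_def by blast
            thus False using C d by simp
          qed
        qed
        have "(\<Sum>(p,q)\<in>pr ` \<G>'. q - p) = (\<Sum>C\<in>\<G>'. snd (pr C) - fst (pr C))"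
          by (subst sum.reindex[OF inj]) (auto simp: case_prod_beta)
        also have "\<dots> = (\<Sum>C\<in>\<G>'. measure lebesgue {fst (pr C)<..<snd (pr C)})"
          by (intro sum.cong) (auto simp: pr_def)
        also have "\<dots> = measure lebesgue (\<Union>C\<in>\<G>'. {fst (pr C)<..<snd (pr C)})"
        proof (rule measure_finite_Union[symmetric])
          show "finite \<G>'" by fact
          show "(\<lambda>C. {fst (pr C)<..<snd (pr C)}) ` \<G>' \<subseteq> sets lebesgue" by auto
          show "disjoint_family_on (\<lambda>C. {fst (pr C)<..<snd (pr C)}) \<G>'"
          proof (unfold disjoint_family_on_def, intro ballI impI, rule ccontr)
            fix C1 C2 assume C: "C1 \<in> \<G>'" "C2 \<in> \<G>'" "C1 \<noteq> C2"
              and "{fst (pr C1)<..<snd (pr C1)} \<inter> {fst (pr C2)<..<snd (pr C2)} \<noteq> {}"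
            then obtain x where x: "x \<in> {fst (pr C1)<..<snd (pr C1)}" "x \<in> {fst (pr C2)<..<snd (pr C2)}" by blast
            have "x \<in> C1" "x \<in> C2" using x intsub[OF C(1)] intsub[OF C(2)] by auto
            hence "C1 = C2" using components_eq[of C1 V C2] C G'sub \<C>_def by blast
            then show False using C by simp
          qed
          show "emeasure lebesgue {fst (pr C)<..<snd (pr C)} \<noteq> \<infinity>" for C
            using emeasure_lborel_box_finite[of "fst (pr C)" "snd (pr C)"] by (simp add: box_real)
        qed
        also have "\<dots> \<le> measure lebesgue V"
        proof (rule measure_mono_fmeasurable)
          show "(\<Union>C\<in>\<G>'. {fst (pr C)<..<snd (pr C)}) \<subseteq> V"
            using intsub G'sub Csub by blast
        qed (use Vm G'sub(2) in \<open>auto intro!: sets.finite_UN\<close>)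
        finally show "(\<Sum>(p,q)\<in>pr ` \<G>'. q - p) < \<delta>" using mV by simp
      qed
      finally show ?thesis by simp
    qed
    have "(\<Union>C\<in>\<C>. J C) \<in> lmeasurable" "measure lebesgue (\<Union>C\<in>\<C>. J C) \<le> e"
      using fmeasurable_UN_bound[OF cc _ bound] measure_UN_bound[OF cc _ bound]
      by (auto simp: J_def)
    thus ?thesis using cover by blast
  qed
  thus ?thesis by (simp add: negligible_outer_le)
qed
lemma ac_cont:
  fixes f :: "real \<Rightarrow> 'a::real_normed_vector"
  assumes ac: "abs_cont_on {a..b} f"
  shows "continuous_on {a..b} f"
  unfolding continuous_on_iff
proof (intro ballI allI impI)
  fix x e :: real assume x: "x \<in> {a..b}" and e: "e > 0"
  obtain \<delta> where \<delta>: "\<delta> > 0" and ac\<delta>: "\<And>D. finite D \<and> (\<forall>(p,q)\<in>D. p \<le> q \<and> {p..q} \<subseteq> {a..b})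
        \<and> disjoint_family_on (\<lambda>(p,q). {p<..<q}) D \<and> (\<Sum>(p,q)\<in>D. q - p) < \<delta>
        \<Longrightarrow> (\<Sum>(p,q)\<in>D. norm (f q - f p)) < e"
    using ac e unfolding abs_cont_on_def by meson
  show "\<exists>d>0. \<forall>x'\<in>{a..b}. dist x' x < d \<longrightarrow> dist (f x') (f x) < e"
  proof (intro exI[of _ \<delta>] conjI ballI impI)
    fix x' assume x': "x' \<in> {a..b}" "dist x' x < \<delta>"
    have "(\<Sum>(p,q)\<in>{(min x x', max x x')}. norm (f q - f p)) < e"
      using x x' by (intro ac\<delta>) (auto simp: disjoint_family_on_def dist_real_def)
    thus "dist (f x') (f x) < e"
      by (cases "x \<le> x'") (auto simp: dist_norm min_def max_def norm_minus_commute)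
  qed (rule \<delta>)
qed

lemma ac_transfer:
  fixes f :: "real \<Rightarrow> 'a::real_normed_vector" and g :: "real \<Rightarrow> 'b::real_normed_vector"
  assumes ac: "abs_cont_on S f" and c: "c \<ge> 0"
    and bd: "\<And>p q. p \<le> q \<Longrightarrow> {p..q} \<subseteq> S \<Longrightarrow> norm (g q - g p) \<le> norm (f q - f p) + c * (q - p)"
  shows "abs_cont_on S g"
  unfolding abs_cont_on_def
proof (intro allI impI)
  fix e :: real assume e: "e > 0"
  obtain \<delta> where \<delta>: "\<delta> > 0" and ac\<delta>: "\<And>D. finite D \<and> (\<forall>(p,q)\<in>D. p \<le> q \<and> {p..q} \<subseteq> S)
        \<and> disjoint_family_on (\<lambda>(p,q). {p<..<q}) D \<and> (\<Sum>(p,q)\<in>D. q - p) < \<delta>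
        \<Longrightarrow> (\<Sum>(p,q)\<in>D. norm (f q - f p)) < e/2"
    using ac half_gt_zero[OF e] unfolding abs_cont_on_def by blast
  define \<delta>' where "\<delta>' = min \<delta> (e / (2 * (c + 1)))"
  have \<delta>': "\<delta>' > 0" using \<delta> e c by (simp add: \<delta>'_def)
  show "\<exists>d>0. \<forall>D. finite D \<and> (\<forall>(a, b)\<in>D. a \<le> b \<and> {a..b} \<subseteq> S) \<and>
        disjoint_family_on (\<lambda>(a, b). {a<..<b}) D \<and> (\<Sum>(a, b)\<in>D. b - a) < d \<longrightarrow>
        (\<Sum>(a, b)\<in>D. norm (g b - g a)) < e"
  proof (intro exI[of _ \<delta>'] conjI allI impI)
    fix D :: "(real \<times> real) set"
    assume D: "finite D \<and> (\<forall>(a, b)\<in>D. a \<le> b \<and> {a..b} \<subseteq> S) \<and>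
        disjoint_family_on (\<lambda>(a, b). {a<..<b}) D \<and> (\<Sum>(a, b)\<in>D. b - a) < \<delta>'"
    have Dfin: "finite D" and Dprop: "\<forall>(a, b)\<in>D. a \<le> b \<and> {a..b} \<subseteq> S"
      and Ddis: "disjoint_family_on (\<lambda>(a, b). {a<..<b}) D" and Dsum: "(\<Sum>(a, b)\<in>D. b - a) < \<delta>'"
      using D by blast+
    have Dsum2: "(\<Sum>(a, b)\<in>D. b - a) < \<delta>" "(\<Sum>(a, b)\<in>D. b - a) \<le> e / (2 * (c + 1))"
      using Dsum unfolding \<delta>'_def by linarith+
    have sf: "(\<Sum>(p,q)\<in>D. norm (f q - f p)) < e/2"
      by (rule ac\<delta>) (intro conjI Dfin Dprop Ddis Dsum2(1))
    have "(\<Sum>(a, b)\<in>D. norm (g b - g a)) \<le> (\<Sum>(a, b)\<in>D. norm (f b - f a) + c * (b - a))"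
    proof (rule sum_mono, clarify)
      fix a b assume "(a, b) \<in> D"
      thus "norm (g b - g a) \<le> norm (f b - f a) + c * (b - a)" using Dprop bd by blast
    qed
    also have "\<dots> = (\<Sum>(a, b)\<in>D. norm (f b - f a)) + c * (\<Sum>(a, b)\<in>D. b - a)"
      by (simp add: sum.distrib sum_distrib_left case_prod_beta)
    also have "c * (\<Sum>(a, b)\<in>D. b - a) \<le> c * (e / (2 * (c + 1)))"
      using Dsum2(2) c by (rule mult_left_mono)
    also have "c * (e / (2 * (c + 1))) \<le> e / 2"
    proof -
      have "c / (c + 1) \<le> 1" using c by simp
      hence "c / (c + 1) * (e / 2) \<le> 1 * (e / 2)" using e by (intro mult_right_mono) auto
      moreover have "c * (e / (2 * (c + 1))) = c / (c + 1) * (e / 2)" by simp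
      ultimately show ?thesis by linarith
    qed
    finally show "(\<Sum>(a, b)\<in>D. norm (g b - g a)) < e" using sf by simp
  qed (rule \<delta>')
qed

lemma inner_sq_deriv:
  fixes \<phi> :: "real \<Rightarrow> 'a::real_inner"
  assumes "(\<phi> has_vector_derivative v) (at t within W)"
  shows "((\<lambda>s. (\<phi> s - y0) \<bullet> (\<phi> s - y0)) has_real_derivative 2 * ((\<phi> t - y0) \<bullet> v)) (at t within W)"
proof -
  have d: "((\<lambda>s. \<phi> s - y0) has_derivative (\<lambda>h. h *\<^sub>R v)) (at t within W)"
    using assms by (auto simp: has_vector_derivative_def intro!: derivative_eq_intros)
  have "((\<lambda>s. (\<phi> s - y0) \<bullet> (\<phi> s - y0)) has_derivative
      (\<lambda>h. (\<phi> t - y0) \<bullet> (h *\<^sub>R v) + (h *\<^sub>R v) \<bullet> (\<phi> t - y0))) (at t within W)"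
    using has_derivative_inner[OF d d] by simp
  then show ?thesis unfolding has_field_derivative_def
    by (rule has_derivative_eq_rhs) (auto simp: inner_commute algebra_simps fun_eq_iff)
qed

theorem lemma16:
  fixes F :: "real ^ 'n \<Rightarrow> (real ^ 'n) set" and K :: "(real ^ 'n) set"
  assumes "usc_setvalued F"
    and "\<And>x. F x \<noteq> {} \<and> compact (F x) \<and> convex (F x)"
    and "closed K"
    and "\<And>x y. x \<notin> K \<Longrightarrow> y \<in> Proj K x \<Longrightarrow> F x \<subseteq> contingent_cone K y"
  shows "forward_invariant F K"
  unfolding forward_invariant_def
proof (intro allI impI subsetI)
  fix I \<phi> z assume sol: "is_solution F I \<phi> \<and> \<phi> 0 \<in> K" and z: "z \<in> \<phi> ` I"
  then obtain t1 where t1: "t1 \<in> I" "z = \<phi> t1" by blast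
  show "z \<in> K"
  proof (rule ccontr)
    assume nz: "z \<notin> K"
    have iv: "is_interval I" "0 \<in> I" "I \<subseteq> {0..}" "loc_abs_cont_on I \<phi>"
      and ae: "AE t in lebesgue. t \<in> I \<longrightarrow> (\<exists>v. (\<phi> has_vector_derivative v) (at t within I) \<and> v \<in> F (\<phi> t))"
      and K0: "\<phi> 0 \<in> K"
      using sol by (auto simp: is_solution_def)
    have Kne: "K \<noteq> {}" using K0 by auto
    have t1pos: "0 \<le> t1" using iv t1 by auto
    have sub: "{0..t1} \<subseteq> I" by (intro subsetI) (use iv(1) iv(2) t1(1) in \<open>unfold is_interval_1, meson atLeastAtMost_iff\<close>)
    have acI: "abs_cont_on {a..b} \<phi>" if "0 \<le> a" "b \<le> t1" for a b
    proof -
      have "{a..b} \<subseteq> I" using sub that by (meson atLeastAtMost_iff order_trans subset_iff)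
      thus ?thesis using iv(4) unfolding loc_abs_cont_on_def by blast
    qed
    have c\<phi>: "continuous_on {0..t1} \<phi>" by (rule ac_cont[OF acI]) auto
    define S where "S = {s \<in> {0..t1}. \<phi> s \<in> K}"
    have S_eq: "S = {0..t1} \<inter> \<phi> -` K" by (auto simp: S_def)
    have Scl: "closed S" unfolding S_eq
      by (rule continuous_closed_preimage[OF c\<phi> closed_atLeastAtMost assms(3)])
    have Sne: "S \<noteq> {}" using K0 t1pos by (auto simp: S_def)
    have Sbdd: "bdd_above S" by (auto simp: S_def bdd_above_def)
    define s0 where "s0 = Sup S"
    have s0S: "s0 \<in> S" unfolding s0_def by (rule closed_contains_Sup[OF Sne Sbdd Scl])
    have s0: "0 \<le> s0" "s0 \<le> t1" "\<phi> s0 \<in> K" using s0S by (auto simp: S_def)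
    have "s0 \<noteq> t1" using s0(3) nz t1 by auto
    hence s0t1: "s0 < t1" using s0 by simp
    have notK: "\<phi> s \<notin> K" if "s0 < s" "s \<le> t1" for s
    proof
      assume "\<phi> s \<in> K"
      hence "s \<in> S" using that s0 by (auto simp: S_def)
      hence "s \<le> s0" unfolding s0_def by (rule cSup_upper[OF _ Sbdd])
      thus False using that by simp
    qed
    define d where "d s = infdist (\<phi> s) K" for s
    have ds0: "d s0 = 0" using s0(3) in_closed_iff_infdist_zero[OF assms(3) Kne] by (simp add: d_def)
    have dt1: "d t1 > 0" using infdist_pos_not_in_closed[OF assms(3) Kne] nz t1 by (simp add: d_def)
    define \<epsilon> where "\<epsilon> = d t1 / (2 * (t1 - s0))"
    have \<epsilon>: "\<epsilon> > 0" using dt1 s0t1 by (simp add: \<epsilon>_def)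
    define g where "g s = d s - \<epsilon> * (s - s0)" for s
    have gs0: "g s0 = 0" by (simp add: g_def ds0)
    have gt1: "g t1 = d t1 / 2" using s0t1 by (simp add: g_def \<epsilon>_def field_simps)
    have acg: "abs_cont_on {s0..t1} g"
    proof (rule ac_transfer[OF acI[OF s0(1) order_refl] less_imp_le[OF \<epsilon>]])
      fix p q :: real assume "p \<le> q"
      have "\<bar>d q - d p\<bar> \<le> dist (\<phi> q) (\<phi> p)" unfolding d_def by (rule infdist_triangle_abs)
      moreover have "\<epsilon> * p \<le> \<epsilon> * q" using \<epsilon> \<open>p \<le> q\<close> by simp
      moreover have "g q - g p = (d q - d p) - (\<epsilon> * q - \<epsilon> * p)" by (simp add: g_def algebra_simps)
      moreover have "\<bar>(d q - d p) - (\<epsilon> * q - \<epsilon> * p)\<bar> \<le> \<bar>d q - d p\<bar> + \<bar>\<epsilon> * q - \<epsilon> * p\<bar>"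
        by (rule abs_triangle_ineq4)
      ultimately show "norm (g q - g p) \<le> norm (\<phi> q - \<phi> p) + \<epsilon> * (q - p)"
        by (simp add: dist_norm right_diff_distrib)
    qed
    have cg: "continuous_on {s0..t1} g" by (rule ac_cont[OF acg])
    obtain N where N: "{x \<in> space lebesgue. \<not> (x \<in> I \<longrightarrow> (\<exists>v. (\<phi> has_vector_derivative v) (at x within I) \<and> v \<in> F (\<phi> x)))} \<subseteq> N"
      "emeasure lebesgue N = 0" "N \<in> sets lebesgue"
      using AE_E[OF ae] by blast
    have Nneg: "negligible N" using N(2,3) by (simp add: negligible_iff_null_sets null_sets_def)
    define E where "E = N \<inter> {s0<..<t1}"
    have Eneg: "negligible E" using Nneg by (auto simp: E_def intro: negligible_subset)
    have gEneg: "negligible (g ` E)" by (rule ac_lusin[OF acg cg Eneg]) (auto simp: E_def)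
    obtain y where y: "0 < y" "y < g t1" "y \<notin> g ` E"
    proof -
      have "box 0 (g t1) \<noteq> {}" using gt1 dt1 by (simp add: box_real)
      hence "\<not> negligible (box 0 (g t1))" using negligible_interval(2) by blast
      hence "\<not> box 0 (g t1) \<subseteq> g ` E" using gEneg negligible_subset by blast
      then obtain y' where "y' \<in> box 0 (g t1)" "y' \<notin> g ` E" by blast
      thus thesis by (intro that[of y']) (simp_all add: box_real)
    qed
    define T where "T = {s \<in> {s0..t1}. g s \<le> y}"
    have T_eq: "T = {s0..t1} \<inter> g -` {..y}" by (auto simp: T_def)
    have Tcl: "closed T" unfolding T_eq
      by (rule continuous_closed_preimage[OF cg closed_atLeastAtMost closed_atMost])
    have Tne: "T \<noteq> {}" using gs0 y s0t1 by (auto simp: T_def intro!: exI[of _ s0])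
    have Tbdd: "bdd_above T" by (auto simp: T_def bdd_above_def)
    define t where "t = Sup T"
    have tT: "t \<in> T" unfolding t_def by (rule closed_contains_Sup[OF Tne Tbdd Tcl])
    have t: "s0 \<le> t" "t \<le> t1" "g t \<le> y" using tT by (auto simp: T_def)
    have "t \<noteq> t1" using t(3) y(2) by auto
    hence tt1: "t < t1" using t by simp
    have gt: "g s > y" if "t < s" "s \<le> t1" for s
    proof (rule ccontr)
      assume "\<not> g s > y"
      hence "s \<in> T" using that t by (auto simp: T_def)
      hence "s \<le> t" unfolding t_def by (rule cSup_upper[OF _ Tbdd])
      thus False using that by simp
    qed
    have gty: "g t = y"
    proof (rule ccontr)
      assume "g t \<noteq> y"
      hence lt: "g t < y" using t by simp
      obtain \<delta> where \<delta>: "\<delta> > 0" "\<And>s. s \<in> {s0..t1} \<Longrightarrow> dist s t < \<delta> \<Longrightarrow> dist (g s) (g t) < y - g t"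
        using cg lt t unfolding continuous_on_iff by (metis atLeastAtMost_iff diff_gt_0_iff_gt)
      define s where "s = min t1 (t + \<delta>/2)"
      have s: "t < s" "s \<le> t1" "s \<in> {s0..t1}" "dist s t < \<delta>"
        using \<delta>(1) tt1 t by (auto simp: s_def dist_real_def)
      have "g s < y" using \<delta>(2)[OF s(3,4)] by (simp add: dist_real_def)
      thus False using gt[OF s(1,2)] by simp
    qed
    have "t \<noteq> s0" using gty gs0 y(1) by auto
    hence s0t: "s0 < t" using t by simp
    have tnN: "t \<notin> N"
    proof
      assume "t \<in> N"
      hence "t \<in> E" using s0t tt1 by (auto simp: E_def)
      thus False using y(3) gty by blast
    qed
    have tI: "t \<in> I" using sub s0 s0t tt1 by auto
    obtain v where v: "(\<phi> has_vector_derivative v) (at t within I)" "v \<in> F (\<phi> t)"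
      using N(1) tnN tI by auto
    have ntK: "\<phi> t \<notin> K" using notK s0t tt1 by simp
    obtain y0 where y0: "y0 \<in> K" "infdist (\<phi> t) K = dist (\<phi> t) y0"
      using infdist_attains_inf[OF assms(3) Kne] by blast
    have y0P: "y0 \<in> Proj K (\<phi> t)" using y0 by (simp add: Proj_def)
    have vn: "(\<phi> t - y0) \<bullet> v \<le> 0"
      using tangent_normal[OF y0P] assms(4)[OF ntK y0P] v(2) by blast
    define r where "r = norm (\<phi> t - y0)"
    have r: "r > 0" using y0(1) ntK by (auto simp: r_def)
    define Q where "Q s = (\<phi> s - y0) \<bullet> (\<phi> s - y0)" for s
    have quot: "(Q s - Q t) / (s - t) > \<epsilon> * r" if s: "t < s" "s \<le> t1" for s
    proof -
      have "g s > g t" using gt[OF s] gty by simp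
      hence dd: "d s - d t > \<epsilon> * (s - t)" by (simp add: g_def algebra_simps)
      have "d s \<le> norm (\<phi> s - y0)" unfolding d_def using infdist_le[OF y0(1)] by (simp add: dist_norm)
      moreover have "d t = r" using y0 by (simp add: d_def r_def dist_norm)
      ultimately have diff: "norm (\<phi> s - y0) - r > \<epsilon> * (s - t)" using dd by simp
      have pos: "\<epsilon> * (s - t) > 0" using \<epsilon> s by simp
      have "Q s - Q t = (norm (\<phi> s - y0) - r) * (norm (\<phi> s - y0) + r)"
        by (simp add: Q_def r_def power2_norm_eq_inner[symmetric] algebra_simps power2_eq_square)
      also have "\<dots> > (\<epsilon> * (s - t)) * r"
      proof -
        have "(\<epsilon> * (s - t)) * r < (norm (\<phi> s - y0) - r) * r" using diff r by simp
        also have "\<dots> \<le> (norm (\<phi> s - y0) - r) * (norm (\<phi> s - y0) + r)"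
          using diff pos by (intro mult_left_mono) auto
        finally show ?thesis .
      qed
      finally show ?thesis using s by (simp add: pos_less_divide_eq algebra_simps)
    qed
    have der: "(Q has_real_derivative 2 * ((\<phi> t - y0) \<bullet> v)) (at t within {t..t1})"
      unfolding Q_def
      by (rule inner_sq_deriv, rule has_vector_derivative_within_subset[OF v(1)])
         (use sub s0 s0t in auto)
    hence "((\<lambda>s. (Q s - Q t) / (s - t)) \<longlongrightarrow> 2 * ((\<phi> t - y0) \<bullet> v)) (at_right t)"
      unfolding has_field_derivative_iff at_within_Icc_at_right[OF tt1] .
    moreover have "2 * ((\<phi> t - y0) \<bullet> v) < \<epsilon> * r" using vn \<epsilon> r by (smt (verit) mult_pos_pos)
    ultimately have ev1: "eventually (\<lambda>s. (Q s - Q t) / (s - t) < \<epsilon> * r) (at_right t)"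
      by (rule order_tendstoD(2))
    have ev2: "eventually (\<lambda>s. s \<in> {t<..<t1}) (at_right t)" by (rule eventually_at_right_real[OF tt1])
    have "eventually (\<lambda>s. False) (at_right t)"
      using eventually_conj[OF ev1 ev2] by (rule eventually_mono) (use quot in force)
    thus False by (simp add: trivial_limit_at_right_real)
  qed
qed

end
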